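(* Let $0<T\le1$ and $f\in_d A^M_T$. Let $N=\lceil f(0+)\rceil\in\mathbb N\cup\{\infty\}$ and, extending $f$ by $f(x)=0$ for $x\ge T$, define the distribution functions $$F_i(x)=\min\{(i-f(x))_+,1\}\,\mathbb I_{\{x>0\}},\qquad x\in\mathbb R,\ i=1,\dots,N.$$ If there exists a random vector $(X_1,\dots,X_N)$ with $X_i\sim F_i$ for each $i$ and $\mathbb P\big(\sum_{i=1}^N X_i\le1\big)=1$, then $f\in_d I^M_T$. In particular, $f\in_d I^M_T$ whenever $(F_1,\dots,F_N)$ is jointly mixable.
   Context: Setting: intrinsic location functionals $L$ on a shift-invariant class $H$ of period-$1$ functions (maps $L:H\times\mathcal I\to\mathbb R\cup\{\infty\}$, $\mathcal I$ the compact nondegenerate intervals, that are measurable, satisfy $L(g,I)\in I\cup\{\infty\}$, $L(g,I)=L(\theta_cg,I-c)+c$ with $\theta_cg(x)=g(x+c)$, stability under restriction: $I_2\subseteq I_1$, $L(g,I_1)\in I_2\Rightarrow L(g,I_2)=L(g,I_1)$, and consistency of existence: $I_2\subseteq I_1$, $L(g,I_2)\ne\infty\Rightarrow L(g,I_1)\ne\infty$). $L$ is first-time if it admits a representation by sets $S(g)\subseteq\mathbb R$ with $S(g)=S(\theta_cg)+c$ and shift-compatible partial orders $\preceq$ on $S(g)$ such that $L(g,I)=\infty$ if $S(g)\cap I=\emptyset$ and otherwise is the unique $\preceq$-maximal element of $S(g)\cap I$, and in which $t_1\le t_2$ implies $t_2\preceq t_1$. A periodic stationary process with period $1$ is a stationary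 process with continuous period-$1$ sample paths in $H$. $I^M_T$ is the set of all laws of $L(\mathbf X,[0,T])$ (on $[0,T]\cup\{\infty\}$), over all first-time intrinsic location functionals $L$ and all periodic stationary processes $\mathbf X$ with period $1$. $A^M_T$ is the class of probability distributions on $[0,T]\cup\{\infty\}$ that are absolutely continuous on $(0,T)$ with a càdlàg non-increasing density there. For a set $A$ of distributions, $f\in_d A$ means some $F\in A$ has density $f$ on $(0,T)$. When $N=\infty$, tuples $(x_1,\dots,x_N)$ mean sequences $(x_i)_{i\ge1}$. A tuple of distributions $(F_1,\dots,F_N)$ is jointly mixable if there is a random vector $(X_1,\dots,X_N)$ with $X_i\sim F_i$ and $\mathbb P(\sum_{i=1}^N X_i=C)=1$ for some constant $C\in\mathbb R$. *)

theory Defs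
  imports "HOL-Probability.Probability"
begin

definition shift :: "real \<Rightarrow> (real \<Rightarrow> real) \<Rightarrow> (real \<Rightarrow> real)" where
  "shift c g = (\<lambda>x. g (x + c))"

definition period1 :: "(real \<Rightarrow> real) \<Rightarrow> bool" where
  "period1 g \<longleftrightarrow> (\<forall>x. g (x + 1) = g x)"

definition shift_invariant :: "(real \<Rightarrow> real) set \<Rightarrow> bool" where
  "shift_invariant H \<longleftrightarrow> (\<forall>g\<in>H. \<forall>c. shift c g \<in> H)"

definition cyl :: "(real \<Rightarrow> real) measure" where
  "cyl = (\<Pi>\<^sub>M t\<in>(UNIV::real set). (borel :: real measure))"

definition path_space :: "(real \<Rightarrow> real) set \<Rightarrow> (real \<Rightarrow> real) measure" where
  "path_space H = restrict_space cyl H"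

text \<open>L g a b stands for L(g,[a,b]) (a < b); the value \<infinity> is the ereal infinity.\<close>
definition intrinsic_location ::
  "(real \<Rightarrow> real) set \<Rightarrow> ((real \<Rightarrow> real) \<Rightarrow> real \<Rightarrow> real \<Rightarrow> ereal) \<Rightarrow> bool" where
  "intrinsic_location H L \<longleftrightarrow>
     (\<forall>a b. a < b \<longrightarrow> (\<lambda>g. L g a b) \<in> borel_measurable (path_space H)) \<and>
     (\<forall>g\<in>H. \<forall>a b. a < b \<longrightarrow> L g a b \<in> ereal ` {a..b} \<union> {\<infinity>}) \<and>
     (\<forall>g\<in>H. \<forall>a b c. a < b \<longrightarrow> L g a b = L (shift c g) (a - c) (b - c) + ereal c) \<and>
     (\<forall>g\<in>H. \<forall>a1 b1 a2 b2. a2 < b2 \<longrightarrow> a1 \<le> a2 \<longrightarrow> b2 \<le> b1 \<longrightarrow>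
         L g a1 b1 \<in> ereal ` {a2..b2} \<longrightarrow> L g a2 b2 = L g a1 b1) \<and>
     (\<forall>g\<in>H. \<forall>a1 b1 a2 b2. a2 < b2 \<longrightarrow> a1 \<le> a2 \<longrightarrow> b2 \<le> b1 \<longrightarrow>
         L g a2 b2 \<noteq> \<infinity> \<longrightarrow> L g a1 b1 \<noteq> \<infinity>)"

definition is_maximal_in :: "real rel \<Rightarrow> real set \<Rightarrow> real \<Rightarrow> bool" where
  "is_maximal_in R A m \<longleftrightarrow> m \<in> A \<and> (\<forall>s\<in>A. (m, s) \<in> R \<longrightarrow> s = m)"

definition first_time ::
  "(real \<Rightarrow> real) set \<Rightarrow> ((real \<Rightarrow> real) \<Rightarrow> real \<Rightarrow> real \<Rightarrow> ereal) \<Rightarrow> bool" where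
  "first_time H L \<longleftrightarrow> intrinsic_location H L \<and>
     (\<exists>(S :: (real \<Rightarrow> real) \<Rightarrow> real set) (R :: (real \<Rightarrow> real) \<Rightarrow> real rel).
        (\<forall>g\<in>H. \<forall>c. S (shift c g) = (\<lambda>t. t - c) ` S g) \<and>
        (\<forall>g\<in>H. partial_order_on (S g) (R g)) \<and>
        (\<forall>g\<in>H. \<forall>c t1 t2. (t1, t2) \<in> R g \<longleftrightarrow> (t1 - c, t2 - c) \<in> R (shift c g)) \<and>
        (\<forall>g\<in>H. \<forall>a b. a < b \<longrightarrow>
            (if S g \<inter> {a..b} = {} then L g a b = \<infinity>
             else (\<exists>m. is_maximal_in (R g) (S g \<inter> {a..b}) m \<and>
                        (\<forall>m'. is_maximal_in (R g) (S g \<inter> {a..b}) m' \<longrightarrow> m' = m) \<and>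
                        L g a b = ereal m))) \<and>
        (\<forall>g\<in>H. \<forall>t1\<in>S g. \<forall>t2\<in>S g. t1 \<le> t2 \<longrightarrow> (t2, t1) \<in> R g))"

definition periodic_stationary :: "(real \<Rightarrow> real) set \<Rightarrow> (real \<Rightarrow> real) measure \<Rightarrow> bool" where
  "periodic_stationary H P \<longleftrightarrow>
     (\<forall>g\<in>H. continuous_on UNIV g \<and> period1 g) \<and> shift_invariant H \<and>
     prob_space P \<and> sets P = sets (path_space H) \<and>
     (\<forall>c. distr P P (shift c) = P)"

definition IMT :: "real \<Rightarrow> ereal measure set" where
  "IMT T = {F. \<exists>H L P. shift_invariant H \<and> (\<forall>g\<in>H. period1 g) \<and> first_time H L \<and>
                   periodic_stationary H P \<and> F = distr P borel (\<lambda>g. L g 0 T)}"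

definition distribution_on :: "real \<Rightarrow> ereal measure \<Rightarrow> bool" where
  "distribution_on T F \<longleftrightarrow> prob_space F \<and> sets F = sets (borel :: ereal measure) \<and>
     emeasure F (ereal ` {0..T} \<union> {\<infinity>}) = 1"

definition density_on :: "real \<Rightarrow> ereal measure \<Rightarrow> (real \<Rightarrow> real) \<Rightarrow> bool" where
  "density_on T F f \<longleftrightarrow> (\<forall>x\<in>{0<..<T}. 0 \<le> f x) \<and>
     (\<forall>A\<in>sets (borel :: real measure). A \<subseteq> {0<..<T} \<longrightarrow>
        emeasure F (ereal ` A) = (\<integral>\<^sup>+ x. ennreal (f x) * indicator A x \<partial>lborel))"

definition cadlag_noninc :: "real \<Rightarrow> (real \<Rightarrow> real) \<Rightarrow> bool" where
  "cadlag_noninc T f \<longleftrightarrow>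
     (\<forall>x y. 0 < x \<longrightarrow> x \<le> y \<longrightarrow> y < T \<longrightarrow> f y \<le> f x) \<and>
     (\<forall>x\<in>{0<..<T}. continuous (at_right x) f) \<and>
     (\<forall>x\<in>{0<..<T}. \<exists>l. (f \<longlongrightarrow> l) (at_left x))"

definition AMT :: "real \<Rightarrow> ereal measure set" where
  "AMT T = {F. distribution_on T F \<and> (\<exists>g. cadlag_noninc T g \<and> density_on T F g)}"

definition in_d :: "real \<Rightarrow> ereal measure set \<Rightarrow> (real \<Rightarrow> real) \<Rightarrow> bool" where
  "in_d T A f \<longleftrightarrow> (\<exists>F\<in>A. density_on T F f)"

definition f0plus :: "(real \<Rightarrow> real) \<Rightarrow> ereal" where
  "f0plus f = Lim (at_right 0) (\<lambda>x. ereal (f x))"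

definition N_of :: "(real \<Rightarrow> real) \<Rightarrow> enat" where
  "N_of f = (case f0plus f of ereal r \<Rightarrow> enat (nat \<lceil>r\<rceil>) | _ \<Rightarrow> \<infinity>)"

definition fext :: "real \<Rightarrow> (real \<Rightarrow> real) \<Rightarrow> real \<Rightarrow> real" where
  "fext T f x = (if T \<le> x then 0 else f x)"

definition Fcdf :: "real \<Rightarrow> (real \<Rightarrow> real) \<Rightarrow> nat \<Rightarrow> real \<Rightarrow> real" where
  "Fcdf T f i x = min (max (real i - fext T f x) 0) 1 * (if x > 0 then 1 else 0)"

definition rv_with_cdfs ::
  "'w measure \<Rightarrow> (nat \<Rightarrow> 'w \<Rightarrow> real) \<Rightarrow> enat \<Rightarrow> (nat \<Rightarrow> real \<Rightarrow> real) \<Rightarrow> bool" where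
  "rv_with_cdfs M X N Fs \<longleftrightarrow> prob_space M \<and>
     (\<forall>i. 1 \<le> i \<longrightarrow> enat i \<le> N \<longrightarrow>
        X i \<in> borel_measurable M \<and>
        (\<forall>x. measure M {\<omega>\<in>space M. X i \<omega> \<le> x} = Fs i x))"

definition sum_le1 :: "enat \<Rightarrow> (nat \<Rightarrow> 'w \<Rightarrow> real) \<Rightarrow> 'w \<Rightarrow> bool" where
  "sum_le1 N X \<omega> = (case N of
      enat n \<Rightarrow> (\<Sum>i=1..n. X i \<omega>) \<le> 1
    | \<infinity> \<Rightarrow> summable (\<lambda>i. X (Suc i) \<omega>) \<and> (\<Sum>i. X (Suc i) \<omega>) \<le> 1)"

definition sum_eq :: "enat \<Rightarrow> (nat \<Rightarrow> 'w \<Rightarrow> real) \<Rightarrow> 'w \<Rightarrow> real \<Rightarrow> bool" where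
  "sum_eq N X \<omega> C = (case N of
      enat n \<Rightarrow> (\<Sum>i=1..n. X i \<omega>) = C
    | \<infinity> \<Rightarrow> (\<lambda>i. X (Suc i) \<omega>) sums C)"

definition mixing_vector ::
  "'w measure \<Rightarrow> (nat \<Rightarrow> 'w \<Rightarrow> real) \<Rightarrow> enat \<Rightarrow> (nat \<Rightarrow> real \<Rightarrow> real) \<Rightarrow> bool" where
  "mixing_vector M X N Fs \<longleftrightarrow> rv_with_cdfs M X N Fs \<and>
     (\<exists>C::real. AE \<omega> in M. sum_eq N X \<omega> C)"

end

theory Submission
  imports Defs
begin

definition HH :: "(real \<Rightarrow> real) set" where
  "HH = {g. continuous_on UNIV g \<and> period1 g}"

definition Zs :: "(real \<Rightarrow> real) \<Rightarrow> real \<Rightarrow> real \<Rightarrow> real set" where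
  "Zs g a b = {x\<in>{a..b}. g x = 0}"

definition LL :: "(real \<Rightarrow> real) \<Rightarrow> real \<Rightarrow> real \<Rightarrow> ereal" where
  "LL g a b = (if Zs g a b = {} then \<infinity> else ereal (Inf (Zs g a b)))"

lemma Zs_closed: "continuous_on UNIV g \<Longrightarrow> closed (Zs g a b)"
proof -
  assume c: "continuous_on UNIV g"
  have "Zs g a b = {a..b} \<inter> g -` {0}" by (auto simp: Zs_def)
  moreover have "closed (g -` {0})" using c
    by (intro continuous_closed_vimage) (auto simp: continuous_on_eq_continuous_at)
  ultimately show ?thesis by auto
qed

lemma Zs_min:
  assumes "continuous_on UNIV g" "Zs g a b \<noteq> {}"
  shows "Inf (Zs g a b) \<in> Zs g a b" "\<And>x. x \<in> Zs g a b \<Longrightarrow> Inf (Zs g a b) \<le> x"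
proof -
  have bb: "bdd_below (Zs g a b)" by (auto simp: Zs_def bdd_below_def)
  show "Inf (Zs g a b) \<in> Zs g a b"
    by (rule closed_contains_Inf[OF assms(2) bb Zs_closed[OF assms(1)]])
  show "\<And>x. x \<in> Zs g a b \<Longrightarrow> Inf (Zs g a b) \<le> x" using bb by (simp add: cInf_lower)
qed

lemma LL_min:
  assumes "continuous_on UNIV g" "m \<in> Zs g a b" "\<And>x. x \<in> Zs g a b \<Longrightarrow> m \<le> x"
  shows "LL g a b = ereal m"
proof -
  have "Zs g a b \<noteq> {}" using assms by auto
  moreover have "Inf (Zs g a b) = m" using assms by (intro cInf_eq_minimum) auto
  ultimately show ?thesis by (simp add: LL_def)
qed

lemma shift_apply: "shift c g x = g (x + c)" by (simp add: shift_def)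

lemma shift_shift: "shift c (shift u g) = shift (u + c) g"
  unfolding shift_def by (simp add: ac_simps)

lemma HH_shift: "g \<in> HH \<Longrightarrow> shift c g \<in> HH"
proof -
  assume g: "g \<in> HH"
  have "continuous_on UNIV (\<lambda>x. g (x + c))"
    using g unfolding HH_def
    by (intro continuous_on_compose2[where f = "\<lambda>x. x + c" and g = g]) (auto intro: continuous_intros)
  moreover have "period1 (\<lambda>x. g (x + c))" unfolding period1_def
  proof
    fix x
    have "g ((x + c) + 1) = g (x + c)" using g by (simp add: HH_def period1_def)
    then show "g (x + 1 + c) = g (x + c)" by (simp add: algebra_simps)
  qed
  ultimately show ?thesis by (simp add: HH_def shift_def)
qed

lemma Zs_shift: "Zs (shift c g) (a - c) (b - c) = (\<lambda>x. x - c) ` Zs g a b"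
proof
  show "Zs (shift c g) (a - c) (b - c) \<subseteq> (\<lambda>x. x - c) ` Zs g a b"
  proof
    fix x assume "x \<in> Zs (shift c g) (a - c) (b - c)"
    then have "x + c \<in> Zs g a b" by (auto simp: Zs_def shift_def)
    then show "x \<in> (\<lambda>x. x - c) ` Zs g a b" by (rule rev_image_eqI) simp
  qed
  show "(\<lambda>x. x - c) ` Zs g a b \<subseteq> Zs (shift c g) (a - c) (b - c)"
    by (auto simp: Zs_def shift_def)
qed

lemma LL_range: "g \<in> HH \<Longrightarrow> LL g a b \<in> ereal ` {a..b} \<union> {\<infinity>}"
  using Zs_min(1)[of g a b] by (auto simp: LL_def HH_def Zs_def)

lemma LL_shift: assumes g: "g \<in> HH" shows "LL g a b = LL (shift c g) (a - c) (b - c) + ereal c"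
proof (cases "Zs g a b = {}")
  case True
  then show ?thesis by (simp add: LL_def Zs_shift)
next
  case False
  have cg: "continuous_on UNIV g" using g by (simp add: HH_def)
  have cs: "continuous_on UNIV (shift c g)" using HH_shift[OF g] by (simp add: HH_def)
  let ?m = "Inf (Zs g a b)"
  have 1: "LL g a b = ereal ?m" using False by (simp add: LL_def)
  have "LL (shift c g) (a - c) (b - c) = ereal (?m - c)"
    apply (rule LL_min[OF cs])
    using Zs_min[OF cg False] unfolding Zs_shift by auto
  then show ?thesis using 1 by simp
qed

lemma LL_restrict:
  assumes g: "g \<in> HH" and "a2 < b2" "a1 \<le> a2" "b2 \<le> b1" "LL g a1 b1 \<in> ereal ` {a2..b2}"
  shows "LL g a2 b2 = LL g a1 b1"
proof -
  have cg: "continuous_on UNIV g" using g by (simp add: HH_def)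
  have ne: "Zs g a1 b1 \<noteq> {}" using assms(5) by (auto simp: LL_def)
  let ?m = "Inf (Zs g a1 b1)"
  have m: "?m \<in> {a2..b2}" using assms(5) ne by (auto simp: LL_def)
  have "LL g a2 b2 = ereal ?m"
    apply (rule LL_min[OF cg])
    using Zs_min[OF cg ne] m assms(3,4) by (auto simp: Zs_def)
  then show ?thesis using ne by (simp add: LL_def)
qed

lemma LL_exist:
  assumes "a1 \<le> a2" "b2 \<le> b1" "LL g a2 b2 \<noteq> \<infinity>"
  shows "LL g a1 b1 \<noteq> \<infinity>"
proof -
  have "Zs g a2 b2 \<subseteq> Zs g a1 b1" using assms(1,2) by (auto simp: Zs_def)
  moreover have "Zs g a2 b2 \<noteq> {}" using assms(3) by (auto simp: LL_def)
  ultimately have "Zs g a1 b1 \<noteq> {}" by blast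
  then show ?thesis by (simp add: LL_def)
qed

lemma space_cyl: "space cyl = UNIV"
  by (simp add: cyl_def space_PiM PiE_UNIV_domain)

lemma space_PH: "space (path_space H) = H"
  by (simp add: path_space_def space_restrict_space space_cyl)

lemma comp_meas: "(\<lambda>g. g q) \<in> borel_measurable (path_space H)"
  unfolding path_space_def
  by (rule measurable_restrict_space1) (simp add: cyl_def measurable_component_singleton)

definition QQ :: "real \<Rightarrow> real \<Rightarrow> real set" where
  "QQ a t = insert a (insert t (\<rat> \<inter> {a..t}))"

lemma countable_QQ: "countable (QQ a t)"
  by (simp add: QQ_def countable_rat)

lemma Z_iff:
  assumes c: "continuous_on UNIV g" and at: "a \<le> t"
  shows "Zs g a t \<noteq> {} \<longleftrightarrow> (\<forall>n::nat. \<exists>q\<in>QQ a t. \<bar>g q\<bar> < 1 / real (Suc n))"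
proof
  assume "Zs g a t \<noteq> {}"
  then obtain x where x: "x \<in> {a..t}" "g x = 0" by (auto simp: Zs_def)
  show "\<forall>n::nat. \<exists>q\<in>QQ a t. \<bar>g q\<bar> < 1 / real (Suc n)"
  proof
    fix n :: nat
    have e: "0 < 1 / real (Suc n)" by simp
    show "\<exists>q\<in>QQ a t. \<bar>g q\<bar> < 1 / real (Suc n)"
    proof (cases "x = a \<or> x = t")
      case True then show ?thesis using x by (auto simp: QQ_def)
    next
      case False
      with x have ax: "a < x" "x < t" by auto
      have "isCont g x" using c by (simp add: continuous_on_eq_continuous_at)
      then obtain d where d: "d > 0" "\<And>y. dist y x < d \<Longrightarrow> dist (g y) (g x) < 1 / real (Suc n)"
        using e unfolding continuous_at_eps_delta by blast
      have "max a (x - d) < min t (x + d)" using ax d(1) by auto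
      then obtain q where q: "q \<in> \<rat>" "max a (x - d) < q" "q < min t (x + d)"
        using Rats_dense_in_real by blast
      then have "dist q x < d" by (auto simp: dist_real_def)
      then have "\<bar>g q\<bar> < 1 / real (Suc n)" using d(2) x(2) by (auto simp: dist_real_def)
      moreover have "q \<in> QQ a t" using q by (auto simp: QQ_def)
      ultimately show ?thesis by blast
    qed
  qed
next
  assume A: "\<forall>n::nat. \<exists>q\<in>QQ a t. \<bar>g q\<bar> < 1 / real (Suc n)"
  show "Zs g a t \<noteq> {}"
  proof (rule ccontr)
    assume "\<not> Zs g a t \<noteq> {}"
    then have nz: "\<And>x. x \<in> {a..t} \<Longrightarrow> g x \<noteq> 0" by (auto simp: Zs_def)
    have "continuous_on {a..t} (\<lambda>x. \<bar>g x\<bar>)"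
      using c by (intro continuous_intros) (auto intro: continuous_on_subset)
    then obtain x0 where x0: "x0 \<in> {a..t}" "\<And>y. y \<in> {a..t} \<Longrightarrow> \<bar>g x0\<bar> \<le> \<bar>g y\<bar>"
      using continuous_attains_inf[of "{a..t}" "\<lambda>x. \<bar>g x\<bar>"] at by auto
    have pos: "0 < \<bar>g x0\<bar>" using nz[OF x0(1)] by simp
    then obtain n where n: "inverse (real (Suc n)) < \<bar>g x0\<bar>" using reals_Archimedean by blast
    from A obtain q where q: "q \<in> QQ a t" "\<bar>g q\<bar> < 1 / real (Suc n)" by blast
    have "q \<in> {a..t}" using q(1) at by (auto simp: QQ_def)
    then have "\<bar>g x0\<bar> \<le> \<bar>g q\<bar>" by (rule x0(2))
    moreover have "1 / real (Suc n) < \<bar>g x0\<bar>" using n by (simp add: inverse_eq_divide)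
    ultimately show False using q(2) by linarith
  qed
qed

lemma Zset_meas:
  assumes "\<forall>g\<in>H. continuous_on UNIV g"
  shows "{g \<in> space (path_space H). Zs g a t \<noteq> {}} \<in> sets (path_space H)"
proof (cases "a \<le> t")
  case False
  then have "{g \<in> space (path_space H). Zs g a t \<noteq> {}} = {}" by (auto simp: Zs_def)
  then show ?thesis by (simp only: sets.empty_sets)
next
  case True
  have "{g \<in> space (path_space H). Zs g a t \<noteq> {}} =
        {g \<in> space (path_space H). \<forall>n::nat. \<exists>q\<in>QQ a t. \<bar>g q\<bar> < 1 / real (Suc n)}"
    using Z_iff[OF _ True] assms by (auto simp: space_PH)
  also have "\<dots> \<in> sets (path_space H)"
  proof -
    note comp_meas[of _ H, measurable]
    show ?thesis using countable_QQ[of a t] by measurable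
  qed
  finally show ?thesis .
qed

lemma LL_meas:
  assumes cH: "\<forall>g\<in>H. continuous_on UNIV g" and ab: "a < b"
  shows "(\<lambda>g. LL g a b) \<in> borel_measurable (path_space H)"
proof -
  define l where "l g = (if Zs g a b = {} then b + 1 else Inf (Zs g a b))" for g
  have lZ: "l g \<in> Zs g a b" if "g \<in> H" "Zs g a b \<noteq> {}" for g
    using Zs_min(1)[of g a b] that cH by (auto simp: l_def)
  have lmin: "l g \<le> x" if "g \<in> H" "x \<in> Zs g a b" for g x
    using Zs_min(2)[of g a b x] that cH by (auto simp: l_def)
  have "l \<in> borel_measurable (path_space H)"
    unfolding borel_measurable_iff_le
  proof
    fix t
    consider "t < a" | "a \<le> t" "t \<le> b" | "b < t" "t < b + 1" | "b + 1 \<le> t" by linarith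
    then show "{w \<in> space (path_space H). l w \<le> t} \<in> sets (path_space H)"
    proof cases
      case 1
      have "{w \<in> space (path_space H). l w \<le> t} = {}"
      proof (intro equalityI subsetI)
        fix g assume g: "g \<in> {w \<in> space (path_space H). l w \<le> t}"
        then have gH: "g \<in> H" "l g \<le> t" by (auto simp: space_PH)
        show "g \<in> {}"
        proof (cases "Zs g a b = {}")
          case True then show ?thesis using gH 1 ab by (simp add: l_def)
        next
          case False then show ?thesis using lZ[OF gH(1) False] gH 1 by (auto simp: Zs_def)
        qed
      qed simp
      then show ?thesis by (simp only: sets.empty_sets)
    next
      case 2
      have "{w \<in> space (path_space H). l w \<le> t} = {g \<in> space (path_space H). Zs g a t \<noteq> {}}"
      proof (intro equalityI subsetI)
        fix g assume g: "g \<in> {w \<in> space (path_space H). l w \<le> t}"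
        then have gH: "g \<in> H" "l g \<le> t" by (auto simp: space_PH)
        have ne: "Zs g a b \<noteq> {}" using gH 2 ab by (auto simp: l_def split: if_splits)
        have "l g \<in> Zs g a t" using lZ[OF gH(1) ne] gH(2) by (auto simp: Zs_def)
        then show "g \<in> {g \<in> space (path_space H). Zs g a t \<noteq> {}}" using g by auto
      next
        fix g assume g: "g \<in> {g \<in> space (path_space H). Zs g a t \<noteq> {}}"
        then obtain x where x: "x \<in> Zs g a t" and gH: "g \<in> H" by (auto simp: space_PH)
        have "x \<in> Zs g a b" using x 2 by (auto simp: Zs_def)
        then have "l g \<le> x" using lmin gH by blast
        then show "g \<in> {w \<in> space (path_space H). l w \<le> t}" using x g by (auto simp: Zs_def)
      qed
      then show ?thesis using Zset_meas[OF cH] by simp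
    next
      case 3
      have "{w \<in> space (path_space H). l w \<le> t} = {g \<in> space (path_space H). Zs g a b \<noteq> {}}"
      proof (intro equalityI subsetI)
        fix g assume g: "g \<in> {w \<in> space (path_space H). l w \<le> t}"
        then have gH: "g \<in> H" "l g \<le> t" by (auto simp: space_PH)
        have ne: "Zs g a b \<noteq> {}" using gH 3 by (auto simp: l_def split: if_splits)
        then show "g \<in> {g \<in> space (path_space H). Zs g a b \<noteq> {}}" using g by auto
      next
        fix g assume g: "g \<in> {g \<in> space (path_space H). Zs g a b \<noteq> {}}"
        then have gH: "g \<in> H" and ne: "Zs g a b \<noteq> {}" by (auto simp: space_PH)
        have "l g \<le> b" using lZ[OF gH ne] by (auto simp: Zs_def)
        then show "g \<in> {w \<in> space (path_space H). l w \<le> t}" using g 3 by auto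
      qed
      then show ?thesis using Zset_meas[OF cH] by simp
    next
      case 4
      have "{w \<in> space (path_space H). l w \<le> t} = space (path_space H)"
      proof (intro equalityI subsetI)
        fix g assume g: "g \<in> space (path_space H)"
        then have gH: "g \<in> H" by (auto simp: space_PH)
        have "l g \<le> t"
        proof (cases "Zs g a b = {}")
          case True then show ?thesis using 4 by (simp add: l_def)
        next
          case False then show ?thesis using lZ[OF gH False] 4 by (auto simp: Zs_def)
        qed
        then show "g \<in> {w \<in> space (path_space H). l w \<le> t}" using g by auto
      qed auto
      then show ?thesis by simp
    qed
  qed
  moreover have "(\<lambda>g. LL g a b) = (\<lambda>g. if Zs g a b \<noteq> {} then ereal (l g) else \<infinity>)"
    by (auto simp: LL_def l_def)
  ultimately show ?thesis
    using Zset_meas[OF cH, of a b]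
    by (simp del: measurable_If add: measurable_If)
qed

lemma HH_cont: "\<forall>g\<in>HH. continuous_on UNIV g" by (simp add: HH_def)

lemma LL_intrinsic: "intrinsic_location HH LL"
  unfolding intrinsic_location_def
proof (intro conjI)
  show "\<forall>a b. a < b \<longrightarrow> (\<lambda>g. LL g a b) \<in> borel_measurable (path_space HH)"
    using LL_meas[OF HH_cont] by simp
  show "\<forall>g\<in>HH. \<forall>a b. a < b \<longrightarrow> LL g a b \<in> ereal ` {a..b} \<union> {\<infinity>}"
    using LL_range by simp
  show "\<forall>g\<in>HH. \<forall>a b c. a < b \<longrightarrow> LL g a b = LL (shift c g) (a - c) (b - c) + ereal c"
    using LL_shift by simp
  show "\<forall>g\<in>HH. \<forall>a1 b1 a2 b2. a2 < b2 \<longrightarrow> a1 \<le> a2 \<longrightarrow> b2 \<le> b1 \<longrightarrow>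
         LL g a1 b1 \<in> ereal ` {a2..b2} \<longrightarrow> LL g a2 b2 = LL g a1 b1"
    using LL_restrict by simp
  show "\<forall>g\<in>HH. \<forall>a1 b1 a2 b2. a2 < b2 \<longrightarrow> a1 \<le> a2 \<longrightarrow> b2 \<le> b1 \<longrightarrow>
         LL g a2 b2 \<noteq> \<infinity> \<longrightarrow> LL g a1 b1 \<noteq> \<infinity>"
    using LL_exist by simp
qed

lemma LL_first_time: "first_time HH LL"
proof -
  define S where "S g = {t. g t = (0::real)}" for g :: "real \<Rightarrow> real"
  define R where "R g = {(t1, t2). t1 \<in> S g \<and> t2 \<in> S g \<and> t2 \<le> t1}" for g
  have 1: "\<forall>g\<in>HH. \<forall>c. S (shift c g) = (\<lambda>t. t - c) ` S g"
  proof (intro ballI allI equalityI subsetI)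
    fix g c x assume "x \<in> S (shift c g)"
    then have "x + c \<in> S g" by (simp add: S_def shift_def)
    then show "x \<in> (\<lambda>t. t - c) ` S g" by (rule rev_image_eqI) simp
  qed (auto simp: S_def shift_def)
  have 2: "\<forall>g\<in>HH. partial_order_on (S g) (R g)"
    by (auto simp: partial_order_on_def preorder_on_def refl_on_def trans_def antisym_def R_def)
  have 3: "\<forall>g\<in>HH. \<forall>c t1 t2. (t1, t2) \<in> R g \<longleftrightarrow> (t1 - c, t2 - c) \<in> R (shift c g)"
    by (auto simp: R_def S_def shift_def)
  have 4: "\<forall>g\<in>HH. \<forall>a b::real. a < b \<longrightarrow>
            (if S g \<inter> {a..b} = {} then LL g a b = \<infinity>
             else (\<exists>m. is_maximal_in (R g) (S g \<inter> {a..b}) m \<and>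
                        (\<forall>m'. is_maximal_in (R g) (S g \<inter> {a..b}) m' \<longrightarrow> m' = m) \<and>
                        LL g a b = ereal m))"
  proof (intro ballI allI impI)
    fix g and a b :: real assume g: "g \<in> HH" and ab: "a < b"
    have cg: "continuous_on UNIV g" using g by (simp add: HH_def)
    have SZ: "S g \<inter> {a..b} = Zs g a b" by (auto simp: S_def Zs_def)
    have mx: "is_maximal_in (R g) (Zs g a b) m \<longleftrightarrow> m \<in> Zs g a b \<and> (\<forall>x\<in>Zs g a b. m \<le> x)" for m
      by (auto simp: is_maximal_in_def R_def S_def Zs_def)
    show "if S g \<inter> {a..b} = {} then LL g a b = \<infinity>
             else (\<exists>m. is_maximal_in (R g) (S g \<inter> {a..b}) m \<and>
                        (\<forall>m'. is_maximal_in (R g) (S g \<inter> {a..b}) m' \<longrightarrow> m' = m) \<and>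
                        LL g a b = ereal m)"
    proof (cases "Zs g a b = {}")
      case True then show ?thesis unfolding SZ by (simp add: LL_def)
    next
      case False
      let ?m = "Inf (Zs g a b)"
      have m1: "?m \<in> Zs g a b" "\<forall>x\<in>Zs g a b. ?m \<le> x" using Zs_min[OF cg False] by auto
      have u: "\<forall>m'. is_maximal_in (R g) (Zs g a b) m' \<longrightarrow> m' = ?m"
        using m1 unfolding mx by force
      have im: "is_maximal_in (R g) (Zs g a b) ?m" using m1 mx by blast
      have ll: "LL g a b = ereal ?m" using False by (simp add: LL_def)
      have "\<exists>m. is_maximal_in (R g) (Zs g a b) m \<and> (\<forall>m'. is_maximal_in (R g) (Zs g a b) m' \<longrightarrow> m' = m) \<and> LL g a b = ereal m"
        using u im ll by blast
      then show ?thesis unfolding SZ using False by simp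
    qed
  qed
  have 5: "\<forall>g\<in>HH. \<forall>t1\<in>S g. \<forall>t2\<in>S g. t1 \<le> t2 \<longrightarrow> (t2, t1) \<in> R g"
    by (auto simp: R_def)
  show ?thesis unfolding first_time_def
    apply (rule conjI[OF LL_intrinsic])
    apply (rule exI[of _ S])
    apply (rule exI[of _ R])
    using 1 2 3 4 5 by (intro conjI)
qed

definition sig :: "(nat \<Rightarrow> real) \<Rightarrow> nat \<Rightarrow> real" where
  "sig x n = (\<Sum>i<n. x i)"

definition condq :: "(nat \<Rightarrow> real) \<Rightarrow> real \<Rightarrow> bool" where
  "condq x q \<longleftrightarrow> 0 \<le> q \<and> q \<le> 1 \<and> (\<forall>n. sig x n \<le> q)"

definition pt :: "(nat \<Rightarrow> real) \<Rightarrow> (nat \<times> int) + (rat \<times> int) \<Rightarrow> real" where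
  "pt x i = (case i of Inl (n, k) \<Rightarrow> sig x n + of_int k
     | Inr (q, k) \<Rightarrow> (if condq x (of_rat q) then of_rat q else 0) + of_int k)"

definition DD :: "(nat \<Rightarrow> real) \<Rightarrow> real set" where
  "DD x = range (pt x)"

definition GG :: "(nat \<Rightarrow> real) \<Rightarrow> real \<Rightarrow> real" where
  "GG x s = infdist s (DD x)"

lemma DD_ne: "DD x \<noteq> {}" by (simp add: DD_def)

lemma GG_INF: "GG x s = (INF i. dist s (pt x i))"
proof -
  have "GG x s = (INF a\<in>range (pt x). dist s a)"
    unfolding GG_def using infdist_notempty[OF DD_ne, of s x] by (simp add: DD_def)
  then show ?thesis by (simp add: image_comp comp_def)
qed

lemma pt_shift: "\<exists>j. pt x j = pt x i + of_int k"
proof (cases i)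
  case (Inl a) then obtain n k' where "i = Inl (n, k')" by (cases a) auto
  then show ?thesis by (intro exI[of _ "Inl (n, k' + k)"]) (simp add: pt_def)
next
  case (Inr a) then obtain q k' where "i = Inr (q, k')" by (cases a) auto
  then show ?thesis by (intro exI[of _ "Inr (q, k' + k)"]) (simp add: pt_def)
qed

lemma GG_int: "GG x (s + of_int k) = GG x s"
proof -
  have "range (\<lambda>i. dist (s + of_int k) (pt x i)) = range (\<lambda>i. dist s (pt x i))"
  proof (intro equalityI subsetI)
    fix y assume "y \<in> range (\<lambda>i. dist (s + of_int k) (pt x i))"
    then obtain i where y: "y = dist (s + of_int k) (pt x i)" by auto
    obtain j where j: "pt x j = pt x i + of_int (- k)" using pt_shift by blast
    have "y = dist s (pt x j)" using y j by (simp add: dist_real_def algebra_simps)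
    then show "y \<in> range (\<lambda>i. dist s (pt x i))" by auto
  next
    fix y assume "y \<in> range (\<lambda>i. dist s (pt x i))"
    then obtain i where y: "y = dist s (pt x i)" by auto
    obtain j where j: "pt x j = pt x i + of_int k" using pt_shift by blast
    have "y = dist (s + of_int k) (pt x j)" using y j by (simp add: dist_real_def algebra_simps)
    then show "y \<in> range (\<lambda>i. dist (s + of_int k) (pt x i))" by auto
  qed
  then show ?thesis by (simp add: GG_INF)
qed

lemma GG_HH: "GG x \<in> HH"
proof -
  have "continuous_on UNIV (GG x)" unfolding GG_def by (intro continuous_intros)
  moreover have "period1 (GG x)" unfolding period1_def using GG_int[of x _ 1] by simp
  ultimately show ?thesis by (simp add: HH_def)
qed

lemma GG_zero: "GG x s = 0 \<longleftrightarrow> s \<in> closure (DD x)"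
  using in_closure_iff_infdist_zero[OF DD_ne] by (simp add: GG_def)

lemma sig_in_DD: "sig x n \<in> DD x"
  unfolding DD_def by (rule range_eqI[of _ _ "Inl (n, 0)"]) (simp add: pt_def)

lemma GG_meas:
  assumes [measurable]: "\<And>j. (\<lambda>z. y z j) \<in> borel_measurable N" and [measurable]: "s \<in> borel_measurable N"
  shows "(\<lambda>z. GG (y z) (s z)) \<in> borel_measurable N"
proof -
  have sm[measurable]: "(\<lambda>z. sig (y z) n) \<in> borel_measurable N" for n
    unfolding sig_def by measurable
  have cm[measurable]: "Measurable.pred N (\<lambda>z. condq (y z) q)" for q
    unfolding condq_def by measurable
  have pm: "(\<lambda>z. pt (y z) i) \<in> borel_measurable N" for i
  proof (cases i)
    case (Inl a) then obtain n k where "i = Inl (n, k)" by (cases a) auto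
    then show ?thesis by (simp add: pt_def)
  next
    case (Inr a) then obtain q k where "i = Inr (q, k)" by (cases a) auto
    then show ?thesis by (simp add: pt_def)
  qed
  have "(\<lambda>z. INF i\<in>UNIV. dist (s z) (pt (y z) i)) \<in> borel_measurable N"
    by (rule borel_measurable_cINF_real) (auto intro: pm borel_measurable_dist)
  then show ?thesis by (simp add: GG_INF)
qed

definition good :: "(nat \<Rightarrow> real) \<Rightarrow> bool" where
  "good x \<longleftrightarrow> (\<forall>i. 0 \<le> x i) \<and> (\<forall>n. sig x n \<le> 1)"

lemma sig_0[simp]: "sig x 0 = 0" by (simp add: sig_def)
lemma sig_Suc: "sig x (Suc n) = sig x n + x n" by (simp add: sig_def)

lemma sig_mono: "good x \<Longrightarrow> m \<le> n \<Longrightarrow> sig x m \<le> sig x n"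
  unfolding sig_def good_def by (intro sum_mono2) auto

lemma sig_nonneg: "good x \<Longrightarrow> 0 \<le> sig x n"
  using sig_mono[of x 0 n] by simp

lemma sig_le1: "good x \<Longrightarrow> sig x n \<le> 1"
  by (simp add: good_def)

lemma gap_aux:
  assumes "good x" "0 \<le> v" "v \<le> 1" "v \<le> sig x j \<or> sig x (Suc j) \<le> v"
  shows "v + of_int k \<notin> {sig x j<..<sig x (Suc j)}"
proof -
  have a: "0 \<le> sig x j" "sig x (Suc j) \<le> 1" using sig_nonneg sig_le1 assms(1) by auto
  consider "k \<ge> 1" | "k \<le> -1" | "k = 0" by linarith
  then show ?thesis
  proof cases
    case 1 then have "real_of_int k \<ge> 1" by simp
    then show ?thesis using a assms by auto
  next
    case 2 then have "real_of_int k \<le> -1" by simp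
    then show ?thesis using a assms by auto
  qed (use assms in auto)
qed

lemma gap_empty:
  assumes g: "good x"
  shows "DD x \<inter> {sig x j<..<sig x (Suc j)} = {}"
proof -
  have "pt x i \<notin> {sig x j<..<sig x (Suc j)}" for i
  proof (cases i)
    case (Inl a) then obtain n k where i: "i = Inl (n, k)" by (cases a) auto
    have "sig x n \<le> sig x j \<or> sig x (Suc j) \<le> sig x n"
      using sig_mono[OF g, of n j] sig_mono[OF g, of "Suc j" n] by (cases "n \<le> j") auto
    then show ?thesis using gap_aux[OF g sig_nonneg[OF g] sig_le1[OF g]] i by (simp add: pt_def)
  next
    case (Inr a) then obtain q k where i: "i = Inr (q, k)" by (cases a) auto
    show ?thesis
    proof (cases "condq x (of_rat q)")
      case True
      then have "0 \<le> (of_rat q :: real)" "(of_rat q :: real) \<le> 1" "sig x (Suc j) \<le> of_rat q"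
        by (auto simp: condq_def)
      then show ?thesis using gap_aux[OF g] i True by (simp add: pt_def)
    next
      case False
      then show ?thesis using gap_aux[OF g, of 0 j k] sig_nonneg[OF g, of j] i by (simp add: pt_def)
    qed
  qed
  then show ?thesis by (auto simp: DD_def)
qed

lemma gap_closure:
  assumes g: "good x"
  shows "closure (DD x) \<inter> {sig x j<..<sig x (Suc j)} = {}"
  using open_Int_closure_eq_empty[of "{sig x j<..<sig x (Suc j)}" "DD x"] gap_empty[OF g, of j]
  by auto

lemma tail_closure:
  assumes g: "good x" and u: "u < 1" and s: "\<forall>n. sig x n < u"
  shows "u \<in> closure (DD x)"
  unfolding closure_approachable
proof (intro allI impI)
  fix e :: real assume e: "0 < e"
  have "u < min (u + e) 1" using e u by auto
  then obtain q where q: "q \<in> \<rat>" "u < q" "q < min (u + e) 1" using Rats_dense_in_real by blast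
  then obtain r where r: "q = of_rat r" by (auto simp: Rats_def)
  have u0: "0 \<le> u" using s[rule_format, of 0] by simp
  have "condq x q" using q s u0 unfolding condq_def by (auto intro: less_imp_le less_trans)
  then have "pt x (Inr (r, 0)) = q" using r by (simp add: pt_def)
  then have "q \<in> DD x" unfolding DD_def by (metis rangeI)
  moreover have "dist q u < e" using q by (auto simp: dist_real_def)
  ultimately show "\<exists>y\<in>DD x. dist y u < e" by blast
qed

lemma Zs_GG: "t \<in> Zs (shift u (GG x)) a b \<longleftrightarrow> t \<in> {a..b} \<and> t + u \<in> closure (DD x)"
  by (simp add: Zs_def shift_def GG_zero)

lemma cont_sGG: "continuous_on UNIV (shift u (GG x))"
  using HH_shift[OF GG_HH] by (simp add: HH_def)

lemma sum_single_ennreal: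
  assumes "\<And>j. j \<noteq> j0 \<Longrightarrow> f j = (0::ennreal)"
  shows "suminf f = f j0"
  using suminf_finite[of "{j0}" f] assms by auto

lemma LL_GG:
  assumes g: "good x" and u: "0 \<le> u" "u < 1" and A: "A \<subseteq> {0<..<T}" and T: "0 < T"
  shows "indicator (ereal ` A) (LL (shift u (GG x)) 0 T) =
     (\<Sum>j. indicator {sig x j<..sig x (Suc j)} u * indicator A (sig x (Suc j) - u) :: ennreal)"
proof (cases "\<exists>n. u \<le> sig x n")
  case False
  then have s: "\<forall>n. sig x n < u" by (meson not_le)
  have "u \<in> closure (DD x)" by (rule tail_closure[OF g u(2) s])
  then have "LL (shift u (GG x)) 0 T = ereal 0"
    using T by (intro LL_min[OF cont_sGG]) (auto simp: Zs_GG)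
  moreover have "0 \<notin> A" using A by auto
  moreover have "indicator {sig x j<..sig x (Suc j)} u = (0::ennreal)" for j
    using s[rule_format, of "Suc j"] by (simp add: indicator_def)
  ultimately show ?thesis by (simp add: image_iff)
next
  case True
  define n0 where "n0 = (LEAST n. u \<le> sig x n)"
  have n0: "u \<le> sig x n0" using True unfolding n0_def by (metis LeastI)
  have n0min: "\<And>n. n < n0 \<Longrightarrow> sig x n < u" unfolding n0_def using not_less_Least by force
  show ?thesis
  proof (cases n0)
    case 0
    then have u0: "u = 0" using n0 u by simp
    have "0 + u \<in> closure (DD x)" using sig_in_DD[of x 0] u0 closure_subset by auto
    then have "LL (shift u (GG x)) 0 T = ereal 0"
      using T by (intro LL_min[OF cont_sGG]) (auto simp: Zs_GG)
    moreover have "0 \<notin> A" using A by auto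
    moreover have "indicator {sig x j<..sig x (Suc j)} u = (0::ennreal)" for j
      using sig_nonneg[OF g, of j] u0 by (simp add: indicator_def)
    ultimately show ?thesis by (simp add: image_iff)
  next
    case (Suc j0)
    have lo: "sig x j0 < u" using n0min Suc by auto
    have hi: "u \<le> sig x (Suc j0)" using n0 Suc by simp
    have other: "indicator {sig x j<..sig x (Suc j)} u * indicator A (sig x (Suc j) - u) = (0::ennreal)"
      if "j \<noteq> j0" for j
    proof (cases "j < j0")
      case True
      then have "sig x (Suc j) \<le> sig x j0" using sig_mono[OF g] by simp
      then show ?thesis using lo by (simp add: indicator_def)
    next
      case False
      then have "sig x (Suc j0) \<le> sig x j" using that sig_mono[OF g] by simp
      then show ?thesis using hi by (simp add: indicator_def)
    qed
    have rhs: "(\<Sum>j. indicator {sig x j<..sig x (Suc j)} u * indicator A (sig x (Suc j) - u) :: ennreal)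
        = indicator A (sig x (Suc j0) - u)"
      using sum_single_ennreal[OF other] lo hi by (simp add: indicator_def)
    have gap: "t + u \<notin> closure (DD x)" if "t \<ge> 0" "t + u < sig x (Suc j0)" for t
      using gap_closure[OF g, of j0] that lo by auto
    show ?thesis
    proof (cases "sig x (Suc j0) - u \<le> T")
      case True
      have "LL (shift u (GG x)) 0 T = ereal (sig x (Suc j0) - u)"
      proof (rule LL_min[OF cont_sGG])
        show "sig x (Suc j0) - u \<in> Zs (shift u (GG x)) 0 T"
          using True hi sig_in_DD[of x "Suc j0"] closure_subset by (auto simp: Zs_GG)
        fix t assume "t \<in> Zs (shift u (GG x)) 0 T"
        then have "t \<ge> 0" "t + u \<in> closure (DD x)" by (auto simp: Zs_GG)
        then show "sig x (Suc j0) - u \<le> t" using gap by force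
      qed
      then show ?thesis using rhs by (simp add: indicator_def image_iff)
    next
      case False
      have "Zs (shift u (GG x)) 0 T = {}"
      proof (intro equalityI subsetI)
        fix t assume "t \<in> Zs (shift u (GG x)) 0 T"
        then have "t \<ge> 0" "t \<le> T" "t + u \<in> closure (DD x)" by (auto simp: Zs_GG)
        then show "t \<in> {}" using gap False by force
      qed simp
      then have "LL (shift u (GG x)) 0 T = \<infinity>" by (simp add: LL_def)
      moreover have "sig x (Suc j0) - u \<notin> A" using False A by auto
      ultimately show ?thesis using rhs by (auto simp: indicator_def)
    qed
  qed
qed

lemma int_u:
  assumes g: "good x" and A: "A \<subseteq> {0<..<T}" and Ab[measurable]: "A \<in> sets borel" and T: "0 < T"
  shows "(\<integral>\<^sup>+u. indicator {0..<1} u * indicator (ereal ` A) (LL (shift u (GG x)) 0 T) \<partial>lborel)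
       = (\<integral>\<^sup>+t. indicator A t * (\<Sum>j. indicator {0<..<x j} t) \<partial>lborel)"
proof -
  let ?h = "\<lambda>j t. indicator A t * indicator {0<..<x j} t :: ennreal"
  have pw: "indicator {0..<1} u * indicator (ereal ` A) (LL (shift u (GG x)) 0 T)
      = (\<Sum>j. ?h j (sig x (Suc j) - u))" for u
  proof (cases "0 \<le> u \<and> u < 1")
    case True
    have "indicator {0..<1} u * indicator (ereal ` A) (LL (shift u (GG x)) 0 T)
       = (\<Sum>j. indicator {sig x j<..sig x (Suc j)} u * indicator A (sig x (Suc j) - u) :: ennreal)"
      using LL_GG[OF g _ _ A T] True by simp
    also have "\<dots> = (\<Sum>j. ?h j (sig x (Suc j) - u))"
      using A by (intro suminf_cong) (auto simp: indicator_def sig_Suc)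
    finally show ?thesis .
  next
    case False
    have "?h j (sig x (Suc j) - u) = 0" for j
    proof (cases "sig x (Suc j) - u \<in> A \<and> sig x (Suc j) - u \<in> {0<..<x j}")
      case True
      then have "sig x j < u" "u < sig x (Suc j)" by (auto simp: sig_Suc)
      then have "0 \<le> u" "u < 1" using sig_nonneg[OF g, of j] sig_le1[OF g, of "Suc j"] by auto
      then show ?thesis using False by auto
    qed (auto simp: indicator_def)
    then have "(\<lambda>j. ?h j (sig x (Suc j) - u)) = (\<lambda>_. 0)" by (intro ext) (simp only:)
    then have "(\<Sum>j. ?h j (sig x (Suc j) - u)) = 0" by simp
    moreover have "indicator {0..<1} u = (0::ennreal)" using False by (simp add: indicator_def)
    ultimately show ?thesis by simp
  qed
  have "(\<integral>\<^sup>+u. indicator {0..<1} u * indicator (ereal ` A) (LL (shift u (GG x)) 0 T) \<partial>lborel)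
      = (\<integral>\<^sup>+u. (\<Sum>j. ?h j (sig x (Suc j) - u)) \<partial>lborel)"
    by (simp add: pw)
  also have "\<dots> = (\<Sum>j. \<integral>\<^sup>+u. ?h j (sig x (Suc j) - u) \<partial>lborel)"
    by (rule nn_integral_suminf) measurable
  also have "\<dots> = (\<Sum>j. \<integral>\<^sup>+t. ?h j t \<partial>lborel)"
  proof (rule suminf_cong)
    fix j
    have "(\<integral>\<^sup>+t. ?h j t \<partial>lborel) = ennreal \<bar>-1\<bar> * (\<integral>\<^sup>+u. ?h j (sig x (Suc j) + (-1) * u) \<partial>lborel)"
      by (rule nn_integral_real_affine) measurable
    then show "(\<integral>\<^sup>+u. ?h j (sig x (Suc j) - u) \<partial>lborel) = (\<integral>\<^sup>+t. ?h j t \<partial>lborel)"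
      by simp
  qed
  also have "\<dots> = (\<integral>\<^sup>+t. (\<Sum>j. ?h j t) \<partial>lborel)"
    by (rule nn_integral_suminf[symmetric]) measurable
  also have "\<dots> = (\<integral>\<^sup>+t. indicator A t * (\<Sum>j. indicator {0<..<x j} t) \<partial>lborel)"
    by simp
  finally show ?thesis .
qed

definition UU :: "real measure" where
  "UU = density lborel (indicator {0..<1})"

lemma space_UU[simp]: "space UU = UNIV" by (simp add: UU_def)
lemma sets_UU[simp]: "sets UU = sets borel" by (simp add: UU_def)

lemma measurable_UU_cong[measurable_cong]: "measurable UU N = measurable borel N"
  by (rule measurable_cong_sets) auto

lemma prob_UU: "prob_space UU"
proof
  show "emeasure UU (space UU) = 1"
    by (simp add: UU_def emeasure_density)
qed

lemma nn_UU: "h \<in> borel_measurable borel \<Longrightarrow> (\<integral>\<^sup>+u. h u \<partial>UU) = (\<integral>\<^sup>+u. indicator {0..<1} u * h u \<partial>lborel)"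
  unfolding UU_def by (subst nn_integral_density) auto

lemma frac_meas[measurable]: "(\<lambda>x::real. frac x) \<in> borel_measurable borel"
  unfolding frac_def using borel_measurable_real_floor by measurable

lemma UU_invariant:
  assumes h[measurable]: "h \<in> borel_measurable borel"
  shows "(\<integral>\<^sup>+u. h (frac (u + c)) \<partial>UU) = (\<integral>\<^sup>+u. h u \<partial>UU)"
proof -
  define r where "r = frac c"
  have r: "0 \<le> r" "r < 1" by (auto simp: r_def frac_lt_1)
  have pw: "indicator {0..<1} u * h (frac (u + c)) =
      indicator {0..<1-r} u * h (u + r) + indicator {1-r..<1} u * h (u + r - 1)" for u
  proof (cases "0 \<le> u \<and> u < 1")
    case True
    then have fu: "frac u = u" by (simp add: frac_eq)
    have "frac (u + c) = (if u + r < 1 then u + r else u + r - 1)"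
      using frac_add[of u c] fu by (simp add: r_def)
    then show ?thesis using True by (auto simp: indicator_def)
  next
    case False then show ?thesis using r by (auto simp: indicator_def)
  qed
  have i1: "(\<integral>\<^sup>+u. indicator {0..<1-r} u * h (u + r) \<partial>lborel) = (\<integral>\<^sup>+t. indicator {r..<1} t * h t \<partial>lborel)"
  proof -
    have "(\<integral>\<^sup>+t. indicator {r..<1} t * h t \<partial>lborel) = ennreal \<bar>1\<bar> * (\<integral>\<^sup>+u. indicator {r..<1} (r + 1 * u) * h (r + 1 * u) \<partial>lborel)"
      by (rule nn_integral_real_affine) measurable
    also have "\<dots> = (\<integral>\<^sup>+u. indicator {0..<1-r} u * h (u + r) \<partial>lborel)"
      by (auto intro!: nn_integral_cong simp: indicator_def add.commute)
    finally show ?thesis by simp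
  qed
  have i2: "(\<integral>\<^sup>+u. indicator {1-r..<1} u * h (u + r - 1) \<partial>lborel) = (\<integral>\<^sup>+t. indicator {0..<r} t * h t \<partial>lborel)"
  proof -
    have "(\<integral>\<^sup>+t. indicator {0..<r} t * h t \<partial>lborel) = ennreal \<bar>1\<bar> * (\<integral>\<^sup>+u. indicator {0..<r} (r - 1 + 1 * u) * h (r - 1 + 1 * u) \<partial>lborel)"
      by (rule nn_integral_real_affine) measurable
    also have "\<dots> = (\<integral>\<^sup>+u. indicator {1-r..<1} u * h (u + r - 1) \<partial>lborel)"
      by (auto intro!: nn_integral_cong simp: indicator_def algebra_simps)
    finally show ?thesis by simp
  qed
  have "(\<integral>\<^sup>+u. h (frac (u + c)) \<partial>UU) = (\<integral>\<^sup>+u. indicator {0..<1} u * h (frac (u + c)) \<partial>lborel)"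
    by (rule nn_UU) measurable
  also have "\<dots> = (\<integral>\<^sup>+u. indicator {0..<1-r} u * h (u + r) + indicator {1-r..<1} u * h (u + r - 1) \<partial>lborel)"
    by (simp add: pw)
  also have "\<dots> = (\<integral>\<^sup>+u. indicator {0..<1-r} u * h (u + r) \<partial>lborel) + (\<integral>\<^sup>+u. indicator {1-r..<1} u * h (u + r - 1) \<partial>lborel)"
    by (rule nn_integral_add) measurable
  also have "\<dots> = (\<integral>\<^sup>+t. indicator {r..<1} t * h t \<partial>lborel) + (\<integral>\<^sup>+t. indicator {0..<r} t * h t \<partial>lborel)"
    using i1 i2 by simp
  also have "\<dots> = (\<integral>\<^sup>+t. indicator {r..<1} t * h t + indicator {0..<r} t * h t \<partial>lborel)"
    by (rule nn_integral_add[symmetric]) measurable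
  also have "\<dots> = (\<integral>\<^sup>+t. indicator {0..<1} t * h t \<partial>lborel)"
    using r by (intro nn_integral_cong) (auto simp: indicator_def)
  also have "\<dots> = (\<integral>\<^sup>+u. h u \<partial>UU)"
    by (rule nn_UU[symmetric]) measurable
  finally show ?thesis .
qed

definition Phi :: "('w \<Rightarrow> nat \<Rightarrow> real) \<Rightarrow> 'w \<times> real \<Rightarrow> real \<Rightarrow> real" where
  "Phi y z = shift (snd z) (GG (y (fst z)))"

lemma measurable_to_UU: "measurable N UU = measurable N borel"
  by (rule measurable_cong_sets) auto

lemma Phi_HH: "Phi y z \<in> HH" by (simp add: Phi_def HH_shift GG_HH)

lemma Phi_meas:
  assumes ym: "\<And>j. (\<lambda>\<omega>. y \<omega> j) \<in> borel_measurable M"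
  shows "Phi y \<in> measurable (M \<Otimes>\<^sub>M UU) (path_space HH)"
  unfolding path_space_def
proof (rule measurable_restrict_space2)
  show "Phi y \<in> space (M \<Otimes>\<^sub>M UU) \<rightarrow> HH" using Phi_HH by auto
  have eq: "Phi y = (\<lambda>z i. GG (y (fst z)) (i + snd z))" by (auto simp: Phi_def shift_def)
  have "(\<lambda>z i. GG (y (fst z)) (i + snd z)) \<in> measurable (M \<Otimes>\<^sub>M UU) cyl"
    unfolding cyl_def
  proof (rule measurable_PiM_single')
    fix i :: real
    have "(\<lambda>z. y (fst z) j) \<in> borel_measurable (M \<Otimes>\<^sub>M UU)" for j
      by (rule measurable_compose[OF measurable_fst ym[of j]])
    moreover have "(\<lambda>z. i + snd z) \<in> borel_measurable (M \<Otimes>\<^sub>M UU)"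
    proof -
      have [measurable]: "snd \<in> borel_measurable (M \<Otimes>\<^sub>M UU)"
        using measurable_snd[of M UU] by (simp add: measurable_to_UU)
      show ?thesis by measurable
    qed
    ultimately show "(\<lambda>z. GG (y (fst z)) (i + snd z)) \<in> borel_measurable (M \<Otimes>\<^sub>M UU)"
      by (rule GG_meas)
  qed auto
  then show "Phi y \<in> measurable (M \<Otimes>\<^sub>M UU) cyl" using eq by simp
qed

lemma shift_meas: "shift c \<in> measurable (path_space HH) (path_space HH)"
  unfolding path_space_def
proof (rule measurable_restrict_space2)
  show "shift c \<in> space (restrict_space cyl HH) \<rightarrow> HH"
    using HH_shift by (auto simp: space_restrict_space)
  have eq: "shift c = (\<lambda>g i. g (i + c))" by (auto simp: shift_def)
  have "(\<lambda>g i. g (i + c)) \<in> measurable (restrict_space cyl HH) cyl"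
    unfolding cyl_def
  proof (rule measurable_PiM_single')
    fix i :: real
    show "(\<lambda>g. g (i + c)) \<in> borel_measurable (restrict_space (Pi\<^sub>M UNIV (\<lambda>t. borel)) HH)"
      using comp_meas[of "i + c" HH] by (simp add: path_space_def cyl_def)
  qed auto
  then show "shift c \<in> measurable (restrict_space cyl HH) cyl" using eq by simp
qed

lemma emeasure_P:
  assumes ym: "\<And>j. (\<lambda>\<omega>. y \<omega> j) \<in> borel_measurable M"
    and B: "B \<in> sets (path_space HH)"
  shows "emeasure (distr (M \<Otimes>\<^sub>M UU) (path_space HH) (Phi y)) B
       = (\<integral>\<^sup>+\<omega>. \<integral>\<^sup>+u. indicator B (Phi y (\<omega>, u)) \<partial>UU \<partial>M)"
proof -
  have pm: "Phi y \<in> measurable (M \<Otimes>\<^sub>M UU) (path_space HH)" by (rule Phi_meas[OF ym])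
  have im: "(\<lambda>z. indicator B (Phi y z) :: ennreal) \<in> borel_measurable (M \<Otimes>\<^sub>M UU)"
    using pm B by measurable
  interpret U: prob_space UU by (rule prob_UU)
  have "emeasure (distr (M \<Otimes>\<^sub>M UU) (path_space HH) (Phi y)) B
      = emeasure (M \<Otimes>\<^sub>M UU) (Phi y -` B \<inter> space (M \<Otimes>\<^sub>M UU))"
    by (rule emeasure_distr[OF pm B])
  also have "\<dots> = (\<integral>\<^sup>+z. indicator (Phi y -` B \<inter> space (M \<Otimes>\<^sub>M UU)) z \<partial>(M \<Otimes>\<^sub>M UU))"
    using measurable_sets[OF pm B] by (simp add: nn_integral_indicator)
  also have "\<dots> = (\<integral>\<^sup>+z. indicator B (Phi y z) \<partial>(M \<Otimes>\<^sub>M UU))"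
    by (intro nn_integral_cong) (auto simp: indicator_def)
  also have "\<dots> = (\<integral>\<^sup>+\<omega>. \<integral>\<^sup>+u. indicator B (Phi y (\<omega>, u)) \<partial>UU \<partial>M)"
    by (rule U.nn_integral_fst[OF im, symmetric])
  finally show ?thesis .
qed

lemma Phi_shift: "shift c (Phi y (\<omega>, u)) = Phi y (\<omega>, frac (u + c))"
proof -
  have "GG (y \<omega>) (s + (u + c)) = GG (y \<omega>) (s + frac (u + c))" for s
  proof -
    have "s + (u + c) = (s + frac (u + c)) + of_int \<lfloor>u + c\<rfloor>" by (simp add: frac_def)
    then show ?thesis using GG_int by metis
  qed
  note * = this
  show ?thesis
  proof (rule ext)
    fix x
    have "shift c (Phi y (\<omega>, u)) x = GG (y \<omega>) (x + (u + c))" by (simp add: Phi_def shift_def ac_simps)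
    also have "\<dots> = GG (y \<omega>) (x + frac (u + c))" by (rule *)
    also have "\<dots> = Phi y (\<omega>, frac (u + c)) x" by (simp add: Phi_def shift_def)
    finally show "shift c (Phi y (\<omega>, u)) x = Phi y (\<omega>, frac (u + c)) x" .
  qed
qed

lemma stationary:
  assumes ym: "\<And>j. (\<lambda>\<omega>. y \<omega> j) \<in> borel_measurable M"
  defines "P \<equiv> distr (M \<Otimes>\<^sub>M UU) (path_space HH) (Phi y)"
  shows "distr P P (shift c) = P"
proof (rule measure_eqI)
  show sP: "sets (distr P P (shift c)) = sets P" by simp
  fix B assume "B \<in> sets (distr P P (shift c))"
  then have B: "B \<in> sets (path_space HH)" by (simp add: P_def)
  have sm: "shift c \<in> measurable P P"
    using shift_meas[of c] unfolding P_def by (simp cong: measurable_cong_sets)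
  have spP: "space P = HH" by (simp add: P_def space_PH)
  have B': "shift c -` B \<inter> HH \<in> sets (path_space HH)"
    using measurable_sets[OF shift_meas B] by (simp add: space_PH)
  have hm: "(\<lambda>u. indicator B (Phi y (\<omega>, u)) :: ennreal) \<in> borel_measurable borel" if om: "\<omega> \<in> space M" for \<omega>
  proof -
    have "(\<lambda>u. Phi y (\<omega>, u)) \<in> measurable UU (path_space HH)"
      by (rule measurable_Pair2[OF Phi_meas[OF ym] om])
    then have "(\<lambda>u. Phi y (\<omega>, u)) \<in> measurable borel (path_space HH)"
      by (simp cong: measurable_cong_sets)
    then show ?thesis using B by measurable
  qed
  have "emeasure (distr P P (shift c)) B = emeasure P (shift c -` B \<inter> space P)"
    by (rule emeasure_distr[OF sm]) (simp add: P_def B)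
  also have "\<dots> = (\<integral>\<^sup>+\<omega>. \<integral>\<^sup>+u. indicator (shift c -` B \<inter> HH) (Phi y (\<omega>, u)) \<partial>UU \<partial>M)"
    using emeasure_P[OF ym B'] by (simp add: P_def space_PH)
  also have "\<dots> = (\<integral>\<^sup>+\<omega>. \<integral>\<^sup>+u. indicator B (Phi y (\<omega>, frac (u + c))) \<partial>UU \<partial>M)"
    by (simp add: indicator_def Phi_shift[symmetric] Phi_HH)
  also have "\<dots> = (\<integral>\<^sup>+\<omega>. \<integral>\<^sup>+u. indicator B (Phi y (\<omega>, u)) \<partial>UU \<partial>M)"
    by (rule nn_integral_cong) (rule UU_invariant[OF hm], assumption)
  also have "\<dots> = emeasure P B"
    unfolding P_def by (rule emeasure_P[OF ym B, symmetric])
  finally show "emeasure (distr P P (shift c)) B = emeasure P B" .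
qed

lemma P_stationary:
  assumes ym: "\<And>j. (\<lambda>\<omega>. y \<omega> j) \<in> borel_measurable M" and pM: "prob_space M"
  shows "periodic_stationary HH (distr (M \<Otimes>\<^sub>M UU) (path_space HH) (Phi y))"
  unfolding periodic_stationary_def
proof (intro conjI allI)
  interpret U: prob_space UU by (rule prob_UU)
  interpret M: prob_space M by (rule pM)
  interpret MU: pair_prob_space M UU by unfold_locales
  show "\<forall>g\<in>HH. continuous_on UNIV g \<and> period1 g" by (simp add: HH_def)
  show "shift_invariant HH" by (simp add: shift_invariant_def HH_shift)
  show "prob_space (distr (M \<Otimes>\<^sub>M UU) (path_space HH) (Phi y))"
    by (rule MU.prob_space_distr[OF Phi_meas[OF ym]])
  show "sets (distr (M \<Otimes>\<^sub>M UU) (path_space HH) (Phi y)) = sets (path_space HH)" by simp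
  fix c show "distr (distr (M \<Otimes>\<^sub>M UU) (path_space HH) (Phi y)) (distr (M \<Otimes>\<^sub>M UU) (path_space HH) (Phi y)) (shift c) =
    distr (M \<Otimes>\<^sub>M UU) (path_space HH) (Phi y)"
    by (rule stationary[OF ym])
qed

lemma ereal_image_vimage: "0 \<notin> A \<Longrightarrow> ereal ` A = real_of_ereal -` A"
proof (intro equalityI subsetI)
  fix x assume "0 \<notin> A" "x \<in> real_of_ereal -` A"
  then show "x \<in> ereal ` A" by (cases x) auto
qed auto

lemma ereal_image_sets: "A \<in> sets borel \<Longrightarrow> 0 \<notin> A \<Longrightarrow> ereal ` A \<in> sets (borel :: ereal measure)"
  by (simp add: ereal_image_vimage measurable_sets_borel[OF borel_measurable_real_of_ereal])

lemma density_formula: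
  assumes ym: "\<And>j. (\<lambda>\<omega>. y \<omega> j) \<in> borel_measurable M" and pM: "prob_space M"
    and gd: "AE \<omega> in M. good (y \<omega>)" and T: "0 < T"
    and A: "A \<subseteq> {0<..<T}" and Ab: "A \<in> sets borel"
  shows "emeasure (distr (distr (M \<Otimes>\<^sub>M UU) (path_space HH) (Phi y)) borel (\<lambda>g. LL g 0 T)) (ereal ` A)
       = (\<integral>\<^sup>+t. indicator A t * (\<Sum>j. emeasure M {\<omega>\<in>space M. t < y \<omega> j}) \<partial>lborel)"
proof -
  interpret M: prob_space M by (rule pM)
  interpret Mlb: pair_sigma_finite M lborel by unfold_locales
  define P where "P = distr (M \<Otimes>\<^sub>M UU) (path_space HH) (Phi y)"
  have LLm: "(\<lambda>g. LL g 0 T) \<in> borel_measurable (path_space HH)" by (rule LL_meas[OF HH_cont T])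
  have LLmP: "(\<lambda>g. LL g 0 T) \<in> borel_measurable P"
    using LLm unfolding P_def by (simp cong: measurable_cong_sets)
  have A0: "0 \<notin> A" using A by auto
  have eA: "ereal ` A \<in> sets (borel :: ereal measure)" by (rule ereal_image_sets[OF Ab A0])
  define B where "B = (\<lambda>g. LL g 0 T) -` (ereal ` A) \<inter> HH"
  have B: "B \<in> sets (path_space HH)"
    using measurable_sets[OF LLm eA] by (simp add: B_def space_PH)
  have ind: "indicator B (Phi y (\<omega>, u)) = (indicator (ereal ` A) (LL (shift u (GG (y \<omega>))) 0 T) :: ennreal)" for \<omega> u
    using Phi_HH[of y "(\<omega>, u)"] by (simp add: B_def Phi_def indicator_def)
  have im: "(\<lambda>u. indicator (ereal ` A) (LL (shift u (GG (y \<omega>))) 0 T) :: ennreal) \<in> borel_measurable borel"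
    if om: "\<omega> \<in> space M" for \<omega>
  proof -
    have "(\<lambda>u. Phi y (\<omega>, u)) \<in> measurable UU (path_space HH)"
      by (rule measurable_Pair2[OF Phi_meas[OF ym] om])
    then have "(\<lambda>u. Phi y (\<omega>, u)) \<in> measurable borel (path_space HH)"
      by (simp cong: measurable_cong_sets)
    then have "(\<lambda>u. indicator B (Phi y (\<omega>, u)) :: ennreal) \<in> borel_measurable borel"
      using B by measurable
    then show ?thesis by (simp add: ind)
  qed
  have "emeasure (distr P borel (\<lambda>g. LL g 0 T)) (ereal ` A) = emeasure P ((\<lambda>g. LL g 0 T) -` (ereal ` A) \<inter> space P)"
    by (rule emeasure_distr[OF LLmP eA])
  also have "\<dots> = emeasure P B" by (simp add: P_def space_PH B_def)
  also have "\<dots> = (\<integral>\<^sup>+\<omega>. \<integral>\<^sup>+u. indicator B (Phi y (\<omega>, u)) \<partial>UU \<partial>M)"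
    unfolding P_def by (rule emeasure_P[OF ym B])
  also have "\<dots> = (\<integral>\<^sup>+\<omega>. \<integral>\<^sup>+u. indicator {0..<1} u * indicator (ereal ` A) (LL (shift u (GG (y \<omega>))) 0 T) \<partial>lborel \<partial>M)"
    unfolding ind by (rule nn_integral_cong) (rule nn_UU[OF im], assumption)
  also have "\<dots> = (\<integral>\<^sup>+\<omega>. \<integral>\<^sup>+t. indicator A t * (\<Sum>j. indicator {0<..<y \<omega> j} t) \<partial>lborel \<partial>M)"
  proof (rule nn_integral_cong_AE)
    show "AE \<omega> in M. (\<integral>\<^sup>+u. indicator {0..<1} u * indicator (ereal ` A) (LL (shift u (GG (y \<omega>))) 0 T) \<partial>lborel)
        = (\<integral>\<^sup>+t. indicator A t * (\<Sum>j. indicator {0<..<y \<omega> j} t) \<partial>lborel)"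
      using gd by eventually_elim (rule int_u[OF _ A Ab T])
  qed
  also have "\<dots> = (\<integral>\<^sup>+t. \<integral>\<^sup>+\<omega>. indicator A t * (\<Sum>j. indicator {0<..<y \<omega> j} t) \<partial>M \<partial>lborel)"
  proof (rule Mlb.Fubini'[symmetric])
    have [measurable]: "(\<lambda>p. y (fst p) j) \<in> borel_measurable (M \<Otimes>\<^sub>M lborel)" for j
      by (rule measurable_compose[OF measurable_fst ym[of j]])
    have [measurable]: "(\<lambda>p. y (fst p) j) \<in> borel_measurable (M \<Otimes>\<^sub>M borel)" for j
      by (rule measurable_compose[OF measurable_fst ym[of j]])
    have [measurable]: "Measurable.pred (M \<Otimes>\<^sub>M borel) (\<lambda>x. snd x \<in> {0<..<y (fst x) j})" for j
      unfolding greaterThanLessThan_iff by measurable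
    show "case_prod (\<lambda>\<omega> t. indicator A t * (\<Sum>j. indicator {0<..<y \<omega> j} t) :: ennreal) \<in> borel_measurable (M \<Otimes>\<^sub>M lborel)"
      unfolding case_prod_beta using Ab by measurable
  qed
  also have "\<dots> = (\<integral>\<^sup>+t. indicator A t * (\<Sum>j. emeasure M {\<omega>\<in>space M. t < y \<omega> j}) \<partial>lborel)"
  proof (rule nn_integral_cong)
    fix t :: real
    show "(\<integral>\<^sup>+\<omega>. indicator A t * (\<Sum>j. indicator {0<..<y \<omega> j} t) \<partial>M) =
          indicator A t * (\<Sum>j. emeasure M {\<omega>\<in>space M. t < y \<omega> j})"
    proof (cases "t \<in> A")
      case False then show ?thesis by simp
    next
      case True
      then have t0: "0 < t" using A by auto
      have "(\<integral>\<^sup>+\<omega>. indicator A t * (\<Sum>j. indicator {0<..<y \<omega> j} t) \<partial>M)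
          = (\<integral>\<^sup>+\<omega>. (\<Sum>j. indicator {\<omega>\<in>space M. t < y \<omega> j} \<omega>) \<partial>M)"
        using True t0 by (intro nn_integral_cong) (simp add: indicator_def)
      also have "\<dots> = (\<Sum>j. \<integral>\<^sup>+\<omega>. indicator {\<omega>\<in>space M. t < y \<omega> j} \<omega> \<partial>M)"
        by (rule nn_integral_suminf) (use ym in measurable)
      also have "\<dots> = (\<Sum>j. emeasure M {\<omega>\<in>space M. t < y \<omega> j})"
        by (intro suminf_cong nn_integral_indicator) (use ym in measurable)
      finally show ?thesis using True by simp
    qed
  qed
  finally show ?thesis by (simp add: P_def)
qed

lemma f0plus_SUP:
  assumes T: "0 < T" and mono: "\<And>x y. 0 < x \<Longrightarrow> x \<le> y \<Longrightarrow> y < T \<Longrightarrow> f y \<le> f x"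
  shows "f0plus f = (SUP x\<in>{0<..<T}. ereal (f x))"
proof -
  let ?S = "SUP x\<in>{0<..<T}. ereal (f x)"
  have "((\<lambda>x. ereal (f x)) \<longlongrightarrow> ?S) (at_right 0)"
  proof (rule order_tendstoI)
    fix a assume "a < ?S"
    then obtain x0 where x0: "x0 \<in> {0<..<T}" "a < ereal (f x0)" by (auto simp: less_SUP_iff)
    have "eventually (\<lambda>x. x \<in> {0<..<x0}) (at_right 0)"
      using x0 by (intro eventually_at_right_real) auto
    then show "eventually (\<lambda>x. a < ereal (f x)) (at_right 0)"
    proof (rule eventually_mono)
      fix x assume "x \<in> {0<..<x0}"
      then have "f x0 \<le> f x" using x0 by (intro mono) auto
      then show "a < ereal (f x)" using x0(2) by (meson ereal_less_eq(3) less_le_trans)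
    qed
  next
    fix a assume a: "?S < a"
    have "eventually (\<lambda>x. x \<in> {0<..<T}) (at_right 0)"
      using T by (intro eventually_at_right_real) auto
    then show "eventually (\<lambda>x. ereal (f x) < a) (at_right 0)"
    proof (rule eventually_mono)
      fix x assume "x \<in> {0<..<T}"
      then have "ereal (f x) \<le> ?S" by (rule SUP_upper)
      then show "ereal (f x) < a" using a by simp
    qed
  qed
  then show ?thesis unfolding f0plus_def by (intro tendsto_Lim) auto
qed

lemma f_le_N:
  assumes T: "0 < T" and mono: "\<And>x y. 0 < x \<Longrightarrow> x \<le> y \<Longrightarrow> y < T \<Longrightarrow> f y \<le> f x"
    and t: "t \<in> {0<..<T}" and N: "N_of f = enat n"
  shows "f t \<le> real n"
proof -
  have eq: "f0plus f = (SUP x\<in>{0<..<T}. ereal (f x))" using f0plus_SUP[of T f] T mono by blast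
  have le: "ereal (f t) \<le> f0plus f" unfolding eq using t by (rule SUP_upper)
  show ?thesis
  proof (cases "f0plus f")
    case (real r)
    then have "n = nat \<lceil>r\<rceil>" using N by (simp add: N_of_def)
    moreover have "f t \<le> r" using le real by simp
    ultimately show ?thesis by linarith
  next
    case PInf then show ?thesis using N by (simp add: N_of_def)
  next
    case MInf then show ?thesis using N by (simp add: N_of_def)
  qed
qed

lemma clamp_sum_fin: "0 \<le> a \<Longrightarrow> (\<Sum>j<n. min (max (a - real j) 0) 1) = min a (real n)"
proof (induction n)
  case 0 then show ?case by simp
next
  case (Suc n)
  then show ?case by (simp add: min_def max_def)
qed

lemma clamp_sum: assumes a: "0 \<le> a" shows "(\<Sum>j. ennreal (min (max (a - real j) 0) 1)) = ennreal a"
proof -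
  define K where "K = nat \<lceil>a\<rceil>"
  have K: "a \<le> real K" unfolding K_def by linarith
  have "(\<Sum>j. ennreal (min (max (a - real j) 0) 1)) = (\<Sum>j\<in>{..<K}. ennreal (min (max (a - real j) 0) 1))"
  proof (rule suminf_finite)
    fix j assume "j \<notin> {..<K}"
    then have "a - real j \<le> 0" using K by simp
    then show "ennreal (min (max (a - real j) 0) 1) = 0" by simp
  qed simp
  also have "\<dots> = ennreal (\<Sum>j<K. min (max (a - real j) 0) 1)" by (rule sum_ennreal) simp
  also have "\<dots> = ennreal a" using clamp_sum_fin[OF a, of K] K by simp
  finally show ?thesis .
qed

definition yy :: "enat \<Rightarrow> (nat \<Rightarrow> 'w \<Rightarrow> real) \<Rightarrow> 'w \<Rightarrow> nat \<Rightarrow> real" where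
  "yy N X \<omega> j = (if enat (Suc j) \<le> N then X (Suc j) \<omega> else 0)"

lemma yy_meas:
  assumes rv: "rv_with_cdfs M X N Fs"
  shows "(\<lambda>\<omega>. yy N X \<omega> j) \<in> borel_measurable M"
proof (cases "enat (Suc j) \<le> N")
  case True then show ?thesis using rv unfolding rv_with_cdfs_def yy_def by auto
next
  case False then show ?thesis unfolding yy_def by simp
qed

lemma tail_prob:
  assumes rv: "rv_with_cdfs M X N (Fcdf T f)" and t: "0 < t"
    and hN: "\<And>n. N = enat n \<Longrightarrow> t < T \<Longrightarrow> f t \<le> real n"
  shows "emeasure M {\<omega>\<in>space M. t < yy N X \<omega> j} = ennreal (if t < T then min (max (f t - real j) 0) 1 else 0)"
proof -
  interpret M: prob_space M using rv by (simp add: rv_with_cdfs_def)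
  show ?thesis
  proof (cases "enat (Suc j) \<le> N")
    case True
    have Xm: "X (Suc j) \<in> borel_measurable M" and Xd: "measure M {\<omega>\<in>space M. X (Suc j) \<omega> \<le> t} = Fcdf T f (Suc j) t"
      using rv True by (auto simp: rv_with_cdfs_def)
    have ev: "{\<omega>\<in>space M. X (Suc j) \<omega> \<le> t} \<in> sets M" using Xm by measurable
    have "{\<omega>\<in>space M. t < yy N X \<omega> j} = space M - {\<omega>\<in>space M. X (Suc j) \<omega> \<le> t}"
      using True by (auto simp: yy_def)
    then have "emeasure M {\<omega>\<in>space M. t < yy N X \<omega> j} = ennreal (1 - Fcdf T f (Suc j) t)"
      using M.prob_compl[OF ev] Xd by (simp add: M.emeasure_eq_measure)
    also have "1 - Fcdf T f (Suc j) t = (if t < T then min (max (f t - real j) 0) 1 else 0)"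
      using t by (auto simp: Fcdf_def fext_def min_def max_def)
    finally show ?thesis .
  next
    case False
    then obtain n where n: "N = enat n" "n \<le> j" by (cases N) auto
    have e: "{\<omega>\<in>space M. t < yy N X \<omega> j} = {}" using False t by (auto simp: yy_def)
    have "t < T \<Longrightarrow> f t - real j \<le> 0" using hN[OF n(1)] n(2) by simp
    then show ?thesis unfolding e by (auto simp: min_def max_def)
  qed
qed

lemma tail_sum:
  assumes rv: "rv_with_cdfs M X N (Fcdf T f)" and t: "0 < t"
    and hN: "\<And>n. N = enat n \<Longrightarrow> t < T \<Longrightarrow> f t \<le> real n"
    and fpos: "t < T \<Longrightarrow> 0 \<le> f t"
  shows "(\<Sum>j. emeasure M {\<omega>\<in>space M. t < yy N X \<omega> j}) = ennreal (if t < T then f t else 0)"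
proof (cases "t < T")
  case True
  then show ?thesis using tail_prob[OF rv t hN] clamp_sum[OF fpos[OF True]] by simp
next
  case False
  then show ?thesis using tail_prob[OF rv t hN] by simp
qed

lemma sum_1_shift: "(\<Sum>i=Suc 0..n. g i) = (\<Sum>j<n. g (Suc j) :: real)"
  by (induction n) auto

lemma AE_nonneg:
  assumes rv: "rv_with_cdfs M X N (Fcdf T f)"
  shows "AE \<omega> in M. \<forall>j. 0 \<le> yy N X \<omega> j"
proof -
  interpret M: prob_space M using rv by (simp add: rv_with_cdfs_def)
  have "AE \<omega> in M. 0 \<le> yy N X \<omega> j" for j
  proof (cases "enat (Suc j) \<le> N")
    case True
    have Xm: "X (Suc j) \<in> borel_measurable M" and Xd: "measure M {\<omega>\<in>space M. X (Suc j) \<omega> \<le> 0} = Fcdf T f (Suc j) 0"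
      using rv True by (auto simp: rv_with_cdfs_def)
    have ev: "{\<omega>\<in>space M. X (Suc j) \<omega> \<le> 0} \<in> sets M" using Xm by measurable
    have "emeasure M {\<omega>\<in>space M. X (Suc j) \<omega> \<le> 0} = 0"
      using Xd by (simp add: M.emeasure_eq_measure Fcdf_def)
    then have "AE \<omega> in M. \<not> X (Suc j) \<omega> \<le> 0"
      by (intro AE_I[OF _ _ ev]) auto
    then show ?thesis using True by (auto simp: yy_def)
  next
    case False then show ?thesis by (simp add: yy_def)
  qed
  then show ?thesis by (simp add: AE_all_countable)
qed

lemma good_of:
  assumes nn: "\<forall>j. 0 \<le> yy N X \<omega> j" and s: "sum_le1 N X \<omega>"
  shows "good (yy N X \<omega>)"
  unfolding good_def
proof (intro conjI allI)
  fix i show "0 \<le> yy N X \<omega> i" using nn by simp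
next
  fix n
  show "sig (yy N X \<omega>) n \<le> 1"
  proof (cases N)
    case (enat n0)
    have s1: "(\<Sum>j<n0. X (Suc j) \<omega>) \<le> 1"
      using s enat by (simp add: sum_le1_def sum_1_shift)
    have "sig (yy N X \<omega>) n \<le> (\<Sum>j<max n n0. yy N X \<omega> j)"
      unfolding sig_def using nn by (intro sum_mono2) auto
    also have "\<dots> = (\<Sum>j<n0. yy N X \<omega> j)"
      by (rule sum.mono_neutral_right) (auto simp: yy_def enat)
    also have "\<dots> = (\<Sum>j<n0. X (Suc j) \<omega>)"
      by (rule sum.cong) (auto simp: yy_def enat)
    finally show ?thesis using s1 by simp
  next
    case infinity
    then have sm: "summable (\<lambda>i. X (Suc i) \<omega>)" and le: "(\<Sum>i. X (Suc i) \<omega>) \<le> 1"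
      using s by (auto simp: sum_le1_def)
    have yy: "yy N X \<omega> j = X (Suc j) \<omega>" for j using infinity by (simp add: yy_def)
    have "sig (yy N X \<omega>) n = (\<Sum>j<n. X (Suc j) \<omega>)" by (simp add: sig_def yy)
    also have "\<dots> \<le> (\<Sum>i. X (Suc i) \<omega>)"
      using nn by (intro sum_le_suminf[OF sm]) (auto simp: yy)
    finally show ?thesis using le by simp
  qed
qed

lemma sum_eq_ennreal:
  assumes nn: "\<forall>j. 0 \<le> yy N X \<omega> j" and s: "sum_eq N X \<omega> C"
  shows "(\<Sum>j. ennreal (yy N X \<omega> j)) = ennreal C"
proof (cases N)
  case (enat n0)
  have "(\<Sum>j. ennreal (yy N X \<omega> j)) = (\<Sum>j\<in>{..<n0}. ennreal (yy N X \<omega> j))"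
    by (rule suminf_finite) (auto simp: yy_def enat)
  also have "\<dots> = ennreal (\<Sum>j<n0. yy N X \<omega> j)" using nn by (intro sum_ennreal) auto
  also have "(\<Sum>j<n0. yy N X \<omega> j) = (\<Sum>j<n0. X (Suc j) \<omega>)"
    by (rule sum.cong) (auto simp: yy_def enat)
  also have "\<dots> = C" using s enat by (simp add: sum_eq_def sum_1_shift)
  finally show ?thesis .
next
  case infinity
  have yy: "yy N X \<omega> j = X (Suc j) \<omega>" for j using infinity by (simp add: yy_def)
  have sm: "(\<lambda>i. X (Suc i) \<omega>) sums C" using s infinity by (simp add: sum_eq_def)
  have "(\<Sum>j. ennreal (X (Suc j) \<omega>)) = ennreal (\<Sum>j. X (Suc j) \<omega>)"
    using nn sm by (intro suminf_ennreal2) (auto simp: yy sums_summable)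
  then show ?thesis using sm by (simp add: yy sums_unique[symmetric])
qed

lemma sum_eq_le1: "sum_eq N X \<omega> C \<Longrightarrow> C \<le> 1 \<Longrightarrow> sum_le1 N X \<omega>"
  by (cases N) (auto simp: sum_eq_def sum_le1_def sums_summable sums_unique[symmetric])

lemma main_case:
  assumes T: "0 < T" and mono: "\<And>x y. 0 < x \<Longrightarrow> x \<le> y \<Longrightarrow> y < T \<Longrightarrow> f y \<le> f x"
    and fpos: "\<forall>x\<in>{0<..<T}. 0 \<le> f x"
    and rv: "rv_with_cdfs M X (N_of f) (Fcdf T f)" and ae: "AE \<omega> in M. sum_le1 (N_of f) X \<omega>"
  shows "in_d T (IMT T) f"
proof -
  define y where "y = yy (N_of f) X"
  have pM: "prob_space M" using rv by (simp add: rv_with_cdfs_def)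
  have ym: "\<And>j. (\<lambda>\<omega>. y \<omega> j) \<in> borel_measurable M" unfolding y_def by (rule yy_meas[OF rv])
  have gd: "AE \<omega> in M. good (y \<omega>)"
    using AE_nonneg[OF rv] ae by eventually_elim (auto simp: y_def intro: good_of)
  define P where "P = distr (M \<Otimes>\<^sub>M UU) (path_space HH) (Phi y)"
  define F where "F = distr P borel (\<lambda>g. LL g 0 T)"
  have FI: "F \<in> IMT T" unfolding IMT_def
  proof (rule CollectI, intro exI conjI)
    show "shift_invariant HH" by (simp add: shift_invariant_def HH_shift)
    show "\<forall>g\<in>HH. period1 g" by (simp add: HH_def)
    show "first_time HH LL" by (rule LL_first_time)
    show "periodic_stationary HH P" unfolding P_def by (rule P_stationary[OF ym pM])
    show "F = distr P borel (\<lambda>g. LL g 0 T)" by (simp add: F_def)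
  qed
  have FD: "density_on T F f" unfolding density_on_def
  proof (intro conjI ballI impI)
    fix x assume "x \<in> {0<..<T}" then show "0 \<le> f x" using fpos by blast
  next
    fix A :: "real set" assume Ab: "A \<in> sets borel" and A: "A \<subseteq> {0<..<T}"
    have "emeasure F (ereal ` A) = (\<integral>\<^sup>+t. indicator A t * (\<Sum>j. emeasure M {\<omega>\<in>space M. t < y \<omega> j}) \<partial>lborel)"
      unfolding F_def P_def by (rule density_formula[OF ym pM gd T A Ab])
    also have "\<dots> = (\<integral>\<^sup>+x. ennreal (f x) * indicator A x \<partial>lborel)"
    proof (rule nn_integral_cong)
      fix t
      show "indicator A t * (\<Sum>j. emeasure M {\<omega>\<in>space M. t < y \<omega> j}) = ennreal (f t) * indicator A t"
      proof (cases "t \<in> A")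
        case False then show ?thesis by simp
      next
        case True
        then have t: "t \<in> {0<..<T}" using A by auto
        have "(\<Sum>j. emeasure M {\<omega>\<in>space M. t < y \<omega> j}) = ennreal (if t < T then f t else 0)"
          unfolding y_def
          by (rule tail_sum[OF rv]) (use t fpos f_le_N[OF T mono t] in auto)
        then show ?thesis using True t by simp
      qed
    qed
    finally show "emeasure F (ereal ` A) = (\<integral>\<^sup>+x. ennreal (f x) * indicator A x \<partial>lborel)" .
  qed
  show ?thesis unfolding in_d_def using FI FD by blast
qed

lemma mix_le1:
  assumes T: "0 < T" and mono: "\<And>x y. 0 < x \<Longrightarrow> x \<le> y \<Longrightarrow> y < T \<Longrightarrow> f y \<le> f x"
    and fpos: "\<forall>x\<in>{0<..<T}. 0 \<le> f x"
    and F0: "prob_space F0" "density_on T F0 f"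
    and mix: "mixing_vector M X (N_of f) (Fcdf T f)"
  shows "AE \<omega> in M. sum_le1 (N_of f) X \<omega>"
proof -
  have rv: "rv_with_cdfs M X (N_of f) (Fcdf T f)" using mix by (simp add: mixing_vector_def)
  obtain C where C: "AE \<omega> in M. sum_eq (N_of f) X \<omega> C" using mix by (auto simp: mixing_vector_def)
  interpret M: prob_space M using rv by (simp add: rv_with_cdfs_def)
  interpret Mlb: pair_sigma_finite M lborel by unfold_locales
  define y where "y = yy (N_of f) X"
  have ym: "\<And>j. (\<lambda>\<omega>. y \<omega> j) \<in> borel_measurable M" unfolding y_def by (rule yy_meas[OF rv])
  have nn: "AE \<omega> in M. \<forall>j. 0 \<le> y \<omega> j" unfolding y_def by (rule AE_nonneg[OF rv])
  have E1: "(\<integral>\<^sup>+\<omega>. (\<Sum>j. ennreal (y \<omega> j)) \<partial>M) = ennreal C"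
  proof -
    have "(\<integral>\<^sup>+\<omega>. (\<Sum>j. ennreal (y \<omega> j)) \<partial>M) = (\<integral>\<^sup>+\<omega>. ennreal C \<partial>M)"
    proof (rule nn_integral_cong_AE)
      show "AE \<omega> in M. (\<Sum>j. ennreal (y \<omega> j)) = ennreal C"
        using nn C unfolding y_def by eventually_elim (metis sum_eq_ennreal)
    qed
    also have "\<dots> = ennreal C" by (simp add: M.emeasure_space_1)
    finally show ?thesis .
  qed
  have E2: "(\<integral>\<^sup>+\<omega>. (\<Sum>j. ennreal (y \<omega> j)) \<partial>M) = (\<integral>\<^sup>+t. ennreal (f t) * indicator {0<..<T} t \<partial>lborel)"
  proof -
    have [measurable]: "(\<lambda>p. y (fst p) j) \<in> borel_measurable (M \<Otimes>\<^sub>M borel)" for j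
      by (rule measurable_compose[OF measurable_fst ym[of j]])
    have [measurable]: "Measurable.pred (M \<Otimes>\<^sub>M borel) (\<lambda>x. snd x \<in> {0<..<y (fst x) j})" for j
      unfolding greaterThanLessThan_iff by measurable
    have "(\<integral>\<^sup>+\<omega>. (\<Sum>j. ennreal (y \<omega> j)) \<partial>M) = (\<integral>\<^sup>+\<omega>. \<integral>\<^sup>+t. (\<Sum>j. indicator {0<..<y \<omega> j} t) \<partial>lborel \<partial>M)"
    proof (rule nn_integral_cong_AE)
      show "AE \<omega> in M. (\<Sum>j. ennreal (y \<omega> j)) = (\<integral>\<^sup>+t. (\<Sum>j. indicator {0<..<y \<omega> j} t) \<partial>lborel)"
        using nn
      proof eventually_elim
        case (elim \<omega>)
        have "(\<integral>\<^sup>+t. (\<Sum>j. indicator {0<..<y \<omega> j} t) \<partial>lborel) = (\<Sum>j. \<integral>\<^sup>+t. indicator {0<..<y \<omega> j} t \<partial>lborel)"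
          by (rule nn_integral_suminf) measurable
        also have "\<dots> = (\<Sum>j. ennreal (y \<omega> j))"
          using elim by (intro suminf_cong) simp
        finally show ?case by simp
      qed
    qed
    also have "\<dots> = (\<integral>\<^sup>+t. \<integral>\<^sup>+\<omega>. (\<Sum>j. indicator {0<..<y \<omega> j} t) \<partial>M \<partial>lborel)"
    proof (rule Mlb.Fubini'[symmetric])
      show "case_prod (\<lambda>\<omega> t. (\<Sum>j. indicator {0<..<y \<omega> j} t) :: ennreal) \<in> borel_measurable (M \<Otimes>\<^sub>M lborel)"
        unfolding case_prod_beta by measurable
    qed
    also have "\<dots> = (\<integral>\<^sup>+t. ennreal (f t) * indicator {0<..<T} t \<partial>lborel)"
    proof (rule nn_integral_cong)
      fix t :: real
      show "(\<integral>\<^sup>+\<omega>. (\<Sum>j. indicator {0<..<y \<omega> j} t) \<partial>M) = ennreal (f t) * indicator {0<..<T} t"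
      proof (cases "0 < t")
        case False then show ?thesis by (simp add: indicator_def)
      next
        case t0: True
        have "(\<integral>\<^sup>+\<omega>. (\<Sum>j. indicator {0<..<y \<omega> j} t) \<partial>M)
            = (\<integral>\<^sup>+\<omega>. (\<Sum>j. indicator {\<omega>\<in>space M. t < y \<omega> j} \<omega>) \<partial>M)"
          using t0 by (intro nn_integral_cong) (simp add: indicator_def)
        also have "\<dots> = (\<Sum>j. \<integral>\<^sup>+\<omega>. indicator {\<omega>\<in>space M. t < y \<omega> j} \<omega> \<partial>M)"
          by (rule nn_integral_suminf) (use ym in measurable)
        also have "\<dots> = (\<Sum>j. emeasure M {\<omega>\<in>space M. t < y \<omega> j})"
          by (intro suminf_cong nn_integral_indicator) (use ym in measurable)
        also have "\<dots> = ennreal (if t < T then f t else 0)"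
          unfolding y_def
        proof (rule tail_sum[OF rv t0])
          fix n assume n: "N_of f = enat n" and tT: "t < T"
          show "f t \<le> real n" by (rule f_le_N[OF T mono _ n]) (use t0 tT in auto)
        next
          assume "t < T" then show "0 \<le> f t" using fpos t0 by auto
        qed
        finally show ?thesis using t0 by (simp add: indicator_def)
      qed
    qed
    finally show ?thesis .
  qed
  have E3: "(\<integral>\<^sup>+t. ennreal (f t) * indicator {0<..<T} t \<partial>lborel) \<le> 1"
  proof -
    have "emeasure F0 (ereal ` {0<..<T}) = (\<integral>\<^sup>+t. ennreal (f t) * indicator {0<..<T} t \<partial>lborel)"
      using F0(2) unfolding density_on_def by auto
    moreover have "emeasure F0 (ereal ` {0<..<T}) \<le> 1" by (rule prob_space.emeasure_le_1[OF F0(1)])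
    ultimately show ?thesis by simp
  qed
  have C1: "C \<le> 1"
  proof (cases "C < 0")
    case False
    have "ennreal C \<le> 1" using E1 E2 E3 by simp
    then show ?thesis using False by (simp add: ennreal_le_1)
  qed simp
  show ?thesis using C by eventually_elim (metis sum_eq_le1 C1)
qed

theorem mainTheorem13:
  fixes T :: real and f :: "real \<Rightarrow> real"
  assumes "0 < T" and "T \<le> 1"
    and "in_d T (AMT T) f"
    and "cadlag_noninc T f"
  shows "((\<exists>(M :: 'w measure) X. rv_with_cdfs M X (N_of f) (Fcdf T f) \<and>
                                  (AE \<omega> in M. sum_le1 (N_of f) X \<omega>))
          \<or> (\<exists>(M :: 'v measure) X. mixing_vector M X (N_of f) (Fcdf T f)))
         \<longrightarrow> in_d T (IMT T) f"
proof
  assume H: "(\<exists>(M :: 'w measure) X. rv_with_cdfs M X (N_of f) (Fcdf T f) \<and>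
                                  (AE \<omega> in M. sum_le1 (N_of f) X \<omega>))
          \<or> (\<exists>(M :: 'v measure) X. mixing_vector M X (N_of f) (Fcdf T f))"
  have T0: "0 < T" using assms(1) .
  have mono: "\<And>x y. 0 < x \<Longrightarrow> x \<le> y \<Longrightarrow> y < T \<Longrightarrow> f y \<le> f x"
    using assms(4) by (simp add: cadlag_noninc_def)
  obtain F0 where F0: "F0 \<in> AMT T" "density_on T F0 f" using assms(3) by (auto simp: in_d_def)
  have pF0: "prob_space F0" using F0(1) by (simp add: AMT_def distribution_on_def)
  have fpos: "\<forall>x\<in>{0<..<T}. 0 \<le> f x" using F0(2) by (simp add: density_on_def)
  from H show "in_d T (IMT T) f"
  proof
    assume "\<exists>(M :: 'w measure) X. rv_with_cdfs M X (N_of f) (Fcdf T f) \<and>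
                                  (AE \<omega> in M. sum_le1 (N_of f) X \<omega>)"
    then obtain M :: "'w measure" and X where rv: "rv_with_cdfs M X (N_of f) (Fcdf T f)"
      and ae: "AE \<omega> in M. sum_le1 (N_of f) X \<omega>" by blast
    show ?thesis by (rule main_case[OF T0 mono fpos rv ae])
  next
    assume "\<exists>(M :: 'v measure) X. mixing_vector M X (N_of f) (Fcdf T f)"
    then obtain M :: "'v measure" and X where mix: "mixing_vector M X (N_of f) (Fcdf T f)" by blast
    have rv: "rv_with_cdfs M X (N_of f) (Fcdf T f)" using mix by (simp add: mixing_vector_def)
    have ae: "AE \<omega> in M. sum_le1 (N_of f) X \<omega>" by (rule mix_le1[OF T0 mono fpos pF0 F0(2) mix])
    show ?thesis by (rule main_case[OF T0 mono fpos rv ae])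
  qed
qed

end
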